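(* Let $X$ and $Y$ be Banach spaces and let $A: D(A)\subseteq X\to Y$ be a closed, (possibly nonlinear) injective map. Let $f\in\mathcal R(A)$ and let $u\in D(A)$ be the (unique) solution of $A(u)=f$. Let $\phi: D(\phi)\to[0,\infty)$ with $D(\phi)\subseteq D(A)$, $\phi(v)>0$ for $v\neq 0$, such that for every constant $c>0$ the set $\{v:\phi(v)\le c\}$ is compact in $X$, and such that $v_n\to v$ in $X$ implies $\phi(v)\le\liminf_{n\to\infty}\phi(v_n)$. Fix a constant $c>0$ with $\phi(u)\le c$. For $\delta>0$ and $f_\delta\in Y$ with $\|f_\delta-f\|\le\delta$, put $$S_\delta:=\{v:\ \|A(v)-f_\delta\|\le\delta,\ \phi(v)\le c\},\qquad F_\delta(v):=\|A(v)-f_\delta\|+\delta\,\phi(v),\qquad m(\delta):=\inf_{v\in S_\delta}F_\delta(v).$$ Let $(v_j)\subset S_\delta$ be a minimizing sequence with $F_\delta(v_j)\le 2m(\delta)$, converging in $X$ to some $v_\delta$, and define $R(\delta)f_\delta:=v_\delta$. Then $R(\delta)$ is a regularizer for the equation $A(u)=f$ in the following sense: there is a function $\eta(\delta)$ with $\eta(\delta)\to0$ as $\delta\to 0$ such that $$\sup_{v\in S_\delta}\|R(\delta)f_\delta-v\|\le\eta(\delta).$$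
   Context: $\mathcal R(A)$ denotes the range of $A$. A family of operators $R(\delta)$ is called a regularizer (in the new sense of the paper) if $\sup_{v\in S_\delta}\|R(\delta)f_\delta-v\|\le\eta(\delta)\to0$ as $\delta\to0$, where $S_\delta$ is the set of all $v$ in the a priori compact set $\{\phi\le c\}$ with $\|A(v)-f_\delta\|\le\delta$, and $f_\delta$ is any noisy datum with $\|f_\delta-f\|\le\delta$. *)

theory Defs
  imports "HOL-Analysis.Analysis"
begin

definition closed_operator :: "'x::real_normed_vector set \<Rightarrow> ('x \<Rightarrow> 'y::real_normed_vector) \<Rightarrow> bool" where
  "closed_operator DA A \<longleftrightarrow> closed {(x, A x) | x. x \<in> DA}"

definition S_delta :: "('x \<Rightarrow> 'y::real_normed_vector) \<Rightarrow> 'x set \<Rightarrow> ('x \<Rightarrow> real) \<Rightarrow> real \<Rightarrow> real \<Rightarrow> 'y \<Rightarrow> 'x set" where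
  "S_delta A Dphi phi c \<delta> f\<delta> = {v \<in> Dphi. norm (A v - f\<delta>) \<le> \<delta> \<and> phi v \<le> c}"

definition F_delta :: "('x \<Rightarrow> 'y::real_normed_vector) \<Rightarrow> ('x \<Rightarrow> real) \<Rightarrow> real \<Rightarrow> 'y \<Rightarrow> 'x \<Rightarrow> real" where
  "F_delta A phi \<delta> f\<delta> v = norm (A v - f\<delta>) + \<delta> * phi v"

definition m_delta :: "('x \<Rightarrow> 'y::real_normed_vector) \<Rightarrow> 'x set \<Rightarrow> ('x \<Rightarrow> real) \<Rightarrow> real \<Rightarrow> real \<Rightarrow> 'y \<Rightarrow> real" where
  "m_delta A Dphi phi c \<delta> f\<delta> = (INF v \<in> S_delta A Dphi phi c \<delta> f\<delta>. F_delta A phi \<delta> f\<delta> v)"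

end

theory Submission
  imports Defs
begin

theorem mainTheorem1:
  fixes A :: "'x::banach \<Rightarrow> 'y::banach" and DA :: "'x set"
    and phi :: "'x \<Rightarrow> real" and Dphi :: "'x set"
    and f :: 'y and u :: 'x and c :: real
  assumes closedA: "closed_operator DA A"
    and injA: "inj_on A DA"
    and f_range: "f \<in> A ` DA"
    and u_dom: "u \<in> DA" and u_sol: "A u = f"
    and Dphi_sub: "Dphi \<subseteq> DA"
    and phi_nonneg: "\<forall>v\<in>Dphi. phi v \<ge> 0"
    and phi_pos: "\<forall>v\<in>Dphi. v \<noteq> 0 \<longrightarrow> phi v > 0"
    and phi_compact: "\<forall>c'>0. compact {v \<in> Dphi. phi v \<le> c'}"
    and phi_lsc: "\<forall>vs v. (\<forall>n. vs n \<in> Dphi) \<longrightarrow> v \<in> Dphi \<longrightarrow> vs \<longlonglongrightarrow> v \<longrightarrow>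
                    ereal (phi v) \<le> liminf (\<lambda>n. ereal (phi (vs n)))"
    and c_pos: "c > 0"
    and u_phi: "u \<in> Dphi" "phi u \<le> c"
  shows "\<exists>\<eta> :: real \<Rightarrow> real. (\<eta> \<longlongrightarrow> 0) (at_right 0) \<and>
     (\<forall>\<delta> > 0. \<forall>f\<delta> :: 'y. norm (f\<delta> - f) \<le> \<delta> \<longrightarrow>
        (\<forall>(vs :: nat \<Rightarrow> 'x) v\<delta>.
            (\<forall>j. vs j \<in> S_delta A Dphi phi c \<delta> f\<delta>)
          \<longrightarrow> (\<lambda>j. F_delta A phi \<delta> f\<delta> (vs j)) \<longlonglongrightarrow> m_delta A Dphi phi c \<delta> f\<delta>
          \<longrightarrow> (\<forall>j. F_delta A phi \<delta> f\<delta> (vs j) \<le> 2 * m_delta A Dphi phi c \<delta> f\<delta>)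
          \<longrightarrow> vs \<longlonglongrightarrow> v\<delta>
          \<longrightarrow> (SUP v \<in> S_delta A Dphi phi c \<delta> f\<delta>. norm (v\<delta> - v)) \<le> \<eta> \<delta>))"
proof -
  define K where "K = {v \<in> Dphi. phi v \<le> c}"
  have Kc: "compact K" using phi_compact c_pos unfolding K_def by auto
  have uK: "u \<in> K" using u_phi unfolding K_def by auto
  obtain B where B: "\<forall>x\<in>K. norm x \<le> B" using compact_imp_bounded[OF Kc] unfolding bounded_iff by blast
  have key: "\<exists>d>0. \<forall>v\<in>K. norm (A v - f) \<le> d \<longrightarrow> norm (v - u) < e" if e: "e > 0" for e
  proof (rule ccontr)
    assume "\<not> ?thesis"
    hence "\<forall>n. \<exists>v. v \<in> K \<and> norm (A v - f) \<le> inverse (real (Suc n)) \<and> norm (v - u) \<ge> e"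
      by (meson not_less positive_imp_inverse_positive of_nat_0_less_iff zero_less_Suc)
    then obtain vs where vs: "\<And>n. vs n \<in> K" "\<And>n. norm (A (vs n) - f) \<le> inverse (real (Suc n))"
       "\<And>n. norm (vs n - u) \<ge> e" by metis
    obtain w r where w: "w \<in> K" "strict_mono r" "(vs \<circ> r) \<longlonglongrightarrow> w"
      using compact_imp_seq_compact[OF Kc] vs(1) unfolding seq_compact_def by metis
    have "(\<lambda>n. A (vs (r n)) - f) \<longlonglongrightarrow> 0"
    proof (rule Lim_null_comparison[OF _ LIMSEQ_inverse_real_of_nat])
      show "\<forall>\<^sub>F n in sequentially. norm (A (vs (r n)) - f) \<le> inverse (real (Suc n))"
      proof (rule always_eventually, rule allI)
        fix n
        have "n \<le> r n" using w(2) by (simp add: strict_mono_imp_increasing)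
        hence "inverse (real (Suc (r n))) \<le> inverse (real (Suc n))"
          by (simp add: le_imp_inverse_le)
        thus "norm (A (vs (r n)) - f) \<le> inverse (real (Suc n))" using vs(2)[of "r n"] by linarith
      qed
    qed
    hence Af: "(\<lambda>n. A (vs (r n))) \<longlonglongrightarrow> f" using Lim_null by blast
    have "(\<lambda>n. (vs (r n), A (vs (r n)))) \<longlonglongrightarrow> (w, f)"
      using tendsto_Pair[OF w(3)[unfolded comp_def] Af] .
    moreover have "\<forall>n. (vs (r n), A (vs (r n))) \<in> {(x, A x) | x. x \<in> DA}"
      using vs(1) Dphi_sub unfolding K_def by auto
    ultimately have "(w, f) \<in> {(x, A x) | x. x \<in> DA}"
      using closedA[unfolded closed_operator_def closed_sequential_limits] by (elim allE[where x="\<lambda>n. (vs (r n), A (vs (r n)))"]) simp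
    hence "w \<in> DA" "A w = f" by auto
    hence "w = u" using injA u_dom u_sol by (metis inj_on_def)
    hence "(\<lambda>n. norm (vs (r n) - u)) \<longlonglongrightarrow> 0"
      using tendsto_norm[OF tendsto_diff[OF w(3)[unfolded comp_def] tendsto_const[of u]]] by simp
    hence "e \<le> 0" by (rule LIMSEQ_le_const) (use vs(3) in auto)
    thus False using e by simp
  qed
  define T where "T = (\<lambda>\<delta>::real. {v \<in> K. norm (A v - f) \<le> 2 * \<delta>})"
  define \<eta> where "\<eta> = (\<lambda>\<delta>. 2 * (SUP v \<in> T \<delta>. norm (v - u)))"
  have bdd: "bdd_above ((\<lambda>v. norm (v - u)) ` T \<delta>)" for \<delta>
  proof (rule bdd_aboveI2)
    fix v assume "v \<in> T \<delta>"
    hence "norm v \<le> B" using B unfolding T_def by auto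
    thus "norm (v - u) \<le> B + norm u" using norm_triangle_ineq4[of v u] by linarith
  qed
  have uT: "u \<in> T \<delta>" if "\<delta> \<ge> 0" for \<delta> using uK u_sol that unfolding T_def by auto
  have inT: "norm (v - u) \<le> \<eta> \<delta> / 2" if "v \<in> T \<delta>" for v \<delta>
    using cSUP_upper[OF that bdd] unfolding \<eta>_def by simp
  have lim: "(\<eta> \<longlongrightarrow> 0) (at_right 0)"
  proof (rule tendstoI)
    fix e :: real assume e: "e > 0"
    obtain d where d: "d > 0" "\<forall>v\<in>K. norm (A v - f) \<le> d \<longrightarrow> norm (v - u) < e / 4"
      using key[of "e/4"] e by auto
    show "\<forall>\<^sub>F \<delta> in at_right 0. dist (\<eta> \<delta>) 0 < e"
      unfolding eventually_at_right_field
    proof (rule exI[of _ "d/2"], intro conjI allI impI)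
      show "(0::real) < d/2" using d by simp
      fix \<delta> :: real assume "0 < \<delta>" "\<delta> < d/2"
      have le: "(SUP v \<in> T \<delta>. norm (v - u)) \<le> e/4"
      proof (rule cSUP_least)
        show "T \<delta> \<noteq> {}" using uT[of \<delta>] \<open>0 < \<delta>\<close> by auto
        fix v assume "v \<in> T \<delta>"
        thus "norm (v - u) \<le> e/4" using d(2) \<open>\<delta> < d/2\<close> unfolding T_def by force
      qed
      have "0 \<le> \<eta> \<delta> / 2" using inT[OF uT, of \<delta>] \<open>0 < \<delta>\<close> by simp
      thus "dist (\<eta> \<delta>) 0 < e" using le e unfolding \<eta>_def by simp
    qed
  qed
  show ?thesis
  proof (rule exI[of _ \<eta>], intro conjI lim allI impI)
    fix \<delta> :: real and f\<delta> :: 'y and vs :: "nat \<Rightarrow> 'x" and v\<delta>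
    assume "\<delta> > 0" and fd: "norm (f\<delta> - f) \<le> \<delta>"
      and vsS: "\<forall>j. vs j \<in> S_delta A Dphi phi c \<delta> f\<delta>" and conv: "vs \<longlonglongrightarrow> v\<delta>"
    have ST: "S_delta A Dphi phi c \<delta> f\<delta> \<subseteq> T \<delta>"
    proof
      fix v assume "v \<in> S_delta A Dphi phi c \<delta> f\<delta>"
      hence "v \<in> K" "norm (A v - f\<delta>) \<le> \<delta>" unfolding S_delta_def K_def by auto
      moreover have "norm (A v - f) \<le> norm (A v - f\<delta>) + norm (f\<delta> - f)"
        using norm_triangle_ineq[of "A v - f\<delta>" "f\<delta> - f"] by simp
      ultimately show "v \<in> T \<delta>" using fd unfolding T_def by auto
    qed
    have vdu: "norm (v\<delta> - u) \<le> \<eta> \<delta> / 2"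
    proof (rule LIMSEQ_le_const2)
      show "(\<lambda>j. norm (vs j - u)) \<longlonglongrightarrow> norm (v\<delta> - u)"
        by (intro tendsto_intros conv)
      show "\<exists>N. \<forall>n\<ge>N. norm (vs n - u) \<le> \<eta> \<delta> / 2" using inT ST vsS by blast
    qed
    show "(SUP v \<in> S_delta A Dphi phi c \<delta> f\<delta>. norm (v\<delta> - v)) \<le> \<eta> \<delta>"
    proof (rule cSUP_least)
      show "S_delta A Dphi phi c \<delta> f\<delta> \<noteq> {}" using vsS by blast
      fix v assume "v \<in> S_delta A Dphi phi c \<delta> f\<delta>"
      hence "norm (v - u) \<le> \<eta> \<delta> / 2" using inT ST by blast
      moreover have "norm (v\<delta> - v) \<le> norm (v\<delta> - u) + norm (v - u)"
        using norm_triangle_ineq[of "v\<delta> - u" "u - v"] by (simp add: norm_minus_commute)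
      ultimately show "norm (v\<delta> - v) \<le> \<eta> \<delta>" using vdu by linarith
    qed
  qed
qed

end
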